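(* There exist an environment $E$ and a total preorder $\succeq$ on $\Pi^E$ such that $\succeq\in\mathrm{Ord}_{\mathrm{GOMORL}}(E)$ but $\succeq\notin\mathrm{Ord}_{\mathrm{FPR}}(E)$; that is, no function $J:\Pi^E\to\mathbb R$ satisfies $\pi_1\succeq\pi_2\iff J(\pi_1)\ge J(\pi_2)$. (Such an ordering can be obtained from a GOMORL specification with $k=2$ and $\succeq_J$ the lexicographic order on $\mathbb R^2$.)
   Context: An environment is a tuple $E=(\mathcal S,\mathcal A,\mathcal T,\mathcal I)$ where $\mathcal S,\mathcal A$ are finite nonempty sets, $\mathcal T:\mathcal S\times\mathcal A\to\Delta(\mathcal S)$ and $\mathcal I\in\Delta(\mathcal S)$. A policy is a map $\pi:\mathcal S\to\Delta(\mathcal A)$ (stationary, possibly stochastic); $\Pi^E$ denotes the set of all policies. A trajectory $\xi=(s_0,a_0,s_1,a_1,\dots)$ is generated under $\pi$ by $s_0\sim\mathcal I$, $a_t\sim\pi(s_t)$, $s_{t+1}\sim\mathcal T(s_t,a_t)$; $\mathbb E^\pi_\xi$ denotes expectation under this distribution. An objective-specification formalism $X$ assigns to each environment $E$ a set of objective specifications, each inducing a total preorder $\succeq$ on $\Pi^E$; $\mathrm{Ord}_X(E)$ is the set of total preorders so induced. A specification defining a scalar $J:\Pi^E\to\mathbb R$ induces $\pi_1\succeq\pi_2\iff J(\pi_1)\ge J(\pi_2)$. FPR: specification $(J)$ with $J:\Pi^E\to\mathbb R$ an arbitrary function. GOMORL: specification $(k,\mathcal R,\gamma,\succeq_J)$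 with $k\in\mathbb N$, $\mathcal R:\mathcal S\times\mathcal A\times\mathcal S\to\mathbb R^k$ with components $\mathcal R_i$, $\gamma\in[0,1)$, $\succeq_J$ a total preorder on $\mathbb R^k$; with $\vec J(\pi)=(J_1(\pi),\dots,J_k(\pi))$, $J_i(\pi)=\mathbb E^\pi_\xi[\sum_{t=0}^\infty\gamma^t\mathcal R_i(s_t,a_t,s_{t+1})]$, it induces $\pi_1\succeq\pi_2\iff\vec J(\pi_1)\succeq_J\vec J(\pi_2)$. The lexicographic order on $\mathbb R^2$ is $(x_1,x_2)\succeq(y_1,y_2)$ iff $x_1>y_1$, or $x_1=y_1$ and $x_2\ge y_2$. *)

theory Defs
  imports "HOL-Probability.Probability"
begin

text \<open>Environments E = (S, A, T, I). States and actions are drawn from nat;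
  S and A are finite nonempty carrier sets (every finite environment is
  isomorphic to one of this form).\<close>

type_synonym env = "nat set \<times> nat set \<times> (nat \<Rightarrow> nat \<Rightarrow> nat pmf) \<times> nat pmf"
type_synonym policy = "nat \<Rightarrow> nat pmf"

definition env_S :: "env \<Rightarrow> nat set" where "env_S E = fst E"
definition env_A :: "env \<Rightarrow> nat set" where "env_A E = fst (snd E)"
definition env_T :: "env \<Rightarrow> nat \<Rightarrow> nat \<Rightarrow> nat pmf" where "env_T E = fst (snd (snd E))"
definition env_I :: "env \<Rightarrow> nat pmf" where "env_I E = snd (snd (snd E))"

definition wf_env :: "env \<Rightarrow> bool" where
  "wf_env E \<longleftrightarrow> finite (env_S E) \<and> env_S E \<noteq> {} \<and> finite (env_A E) \<and> env_A E \<noteq> {}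
     \<and> set_pmf (env_I E) \<subseteq> env_S E
     \<and> (\<forall>s\<in>env_S E. \<forall>a\<in>env_A E. set_pmf (env_T E s a) \<subseteq> env_S E)"

text \<open>Policies S \<rightarrow> \<Delta>(A), represented extensionally (fixed dummy value outside S).\<close>
definition policies :: "env \<Rightarrow> policy set" where
  "policies E = {\<pi>. (\<forall>s\<in>env_S E. set_pmf (\<pi> s) \<subseteq> env_A E)
                    \<and> (\<forall>s. s \<notin> env_S E \<longrightarrow> \<pi> s = return_pmf undefined)}"

fun state_dist :: "env \<Rightarrow> policy \<Rightarrow> nat \<Rightarrow> nat pmf" where
  "state_dist E \<pi> 0 = env_I E"
| "state_dist E \<pi> (Suc t) =
     bind_pmf (state_dist E \<pi> t) (\<lambda>s. bind_pmf (\<pi> s) (\<lambda>a. env_T E s a))"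

definition step_dist :: "env \<Rightarrow> policy \<Rightarrow> nat \<Rightarrow> (nat \<times> nat \<times> nat) pmf" where
  "step_dist E \<pi> t =
     bind_pmf (state_dist E \<pi> t) (\<lambda>s. bind_pmf (\<pi> s) (\<lambda>a.
        map_pmf (\<lambda>s'. (s, a, s')) (env_T E s a)))"

text \<open>Expected discounted return
  E_\<xi>[\<Sum>_t \<gamma>^t R(s_t,a_t,s_{t+1})] = \<Sum>_t \<gamma>^t E[R(s_t,a_t,s_{t+1})]
  (exchange justified since R is bounded on the finite S\<times>A\<times>S and \<gamma> < 1).\<close>
definition disc_return :: "env \<Rightarrow> (nat \<Rightarrow> nat \<Rightarrow> nat \<Rightarrow> real) \<Rightarrow> real \<Rightarrow> policy \<Rightarrow> real" where
  "disc_return E R \<gamma> \<pi> =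
     (\<Sum>t. \<gamma> ^ t * measure_pmf.expectation (step_dist E \<pi> t) (\<lambda>(s, a, s'). R s a s'))"

definition total_preorder_on :: "'b set \<Rightarrow> ('b \<times> 'b) set \<Rightarrow> bool" where
  "total_preorder_on X r \<longleftrightarrow> r \<subseteq> X \<times> X \<and> refl_on X r \<and> trans r \<and> total_on X r"

definition Ord_FPR :: "env \<Rightarrow> (policy \<times> policy) set set" where
  "Ord_FPR E = {r. \<exists>J :: policy \<Rightarrow> real.
      r = {(\<pi>1, \<pi>2). \<pi>1 \<in> policies E \<and> \<pi>2 \<in> policies E \<and> J \<pi>1 \<ge> J \<pi>2}}"

text \<open>GOMORL: vectors in \<real>^k are functions nat \<Rightarrow> real vanishing at indices \<ge> k;
  the reward has components Rs i for i < k.\<close>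
definition realvecs :: "nat \<Rightarrow> (nat \<Rightarrow> real) set" where
  "realvecs k = {x. \<forall>i\<ge>k. x i = 0}"

definition Jvec :: "env \<Rightarrow> nat \<Rightarrow> (nat \<Rightarrow> nat \<Rightarrow> nat \<Rightarrow> nat \<Rightarrow> real) \<Rightarrow> real \<Rightarrow> policy \<Rightarrow> (nat \<Rightarrow> real)" where
  "Jvec E k Rs \<gamma> \<pi> = (\<lambda>i. if i < k then disc_return E (Rs i) \<gamma> \<pi> else 0)"

definition Ord_GOMORL :: "env \<Rightarrow> (policy \<times> policy) set set" where
  "Ord_GOMORL E = {r. \<exists>(k::nat) Rs \<gamma> rJ.
      0 \<le> \<gamma> \<and> \<gamma> < 1 \<and> total_preorder_on (realvecs k) rJ \<and>
      r = {(\<pi>1, \<pi>2). \<pi>1 \<in> policies E \<and> \<pi>2 \<in> policies E \<and>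
                      (Jvec E k Rs \<gamma> \<pi>1, Jvec E k Rs \<gamma> \<pi>2) \<in> rJ}}"

end

theory Submission
  imports Defs
begin

definition E0 :: env where
  "E0 = ({0}, {0,1,2}, (\<lambda>s a. return_pmf 0), return_pmf 0)"

definition P :: "real \<Rightarrow> nat \<Rightarrow> policy" where
  "P x c = (\<lambda>s. if s = 0 then map_pmf (\<lambda>b. if b then 1 else c) (bernoulli_pmf x)
               else return_pmf undefined)"

definition Rs0 :: "nat \<Rightarrow> nat \<Rightarrow> nat \<Rightarrow> nat \<Rightarrow> real" where
  "Rs0 i s a s' = (if i = 0 then (if a = 1 then 1 else 0) else (if a = 2 then 1 else 0))"

definition lexJ :: "((nat \<Rightarrow> real) \<times> (nat \<Rightarrow> real)) set" where
  "lexJ = {(x, y). x \<in> realvecs 2 \<and> y \<in> realvecs 2 \<and> (x 0 > y 0 \<or> (x 0 = y 0 \<and> x 1 \<ge> y 1))}"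

definition r0 :: "(policy \<times> policy) set" where
  "r0 = {(\<pi>1, \<pi>2). \<pi>1 \<in> policies E0 \<and> \<pi>2 \<in> policies E0 \<and>
                      (Jvec E0 2 Rs0 0 \<pi>1, Jvec E0 2 Rs0 0 \<pi>2) \<in> lexJ}"

lemma wf: "wf_env E0"
  by (auto simp: wf_env_def E0_def env_S_def env_A_def env_T_def env_I_def)

lemma Jvec_in: "Jvec E0 2 Rs0 0 \<pi> \<in> realvecs 2"
  by (simp add: Jvec_def realvecs_def)

lemma tp_lex: "total_preorder_on (realvecs 2) lexJ"
  unfolding total_preorder_on_def lexJ_def refl_on_def trans_def total_on_def
  by auto

lemma tp_r0: "total_preorder_on (policies E0) r0"
  unfolding total_preorder_on_def r0_def refl_on_def trans_def total_on_def
  using Jvec_in by (auto simp: lexJ_def)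

lemma step0: "step_dist E0 \<pi> 0 = map_pmf (\<lambda>a. (0, a, 0)) (\<pi> 0)"
  by (simp add: step_dist_def E0_def env_I_def env_T_def bind_return_pmf map_pmf_def)

lemma disc0: "disc_return E0 R 0 \<pi> = measure_pmf.expectation (\<pi> 0) (\<lambda>a. R 0 a 0)"
proof -
  define c where "c = measure_pmf.expectation (step_dist E0 \<pi> 0) (\<lambda>(s, a, s'). R s a s')"
  have eq: "(\<lambda>t. (0::real) ^ t * measure_pmf.expectation (step_dist E0 \<pi> t) (\<lambda>(s, a, s'). R s a s'))
        = (\<lambda>t. if t = 0 then c else 0)"
    by (auto simp: power_0_left c_def)
  have "(\<lambda>t. if t = 0 then c else 0) sums c"
    using sums_single[of 0 "\<lambda>_. c"] by simp
  then have "disc_return E0 R 0 \<pi> = c"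
    unfolding disc_return_def eq by (rule sums_unique[symmetric])
  then show ?thesis by (simp add: c_def step0)
qed

lemma P_in: "x \<in> {0..1} \<Longrightarrow> c \<in> {0,2} \<Longrightarrow> P x c \<in> policies E0"
  by (auto simp: policies_def P_def E0_def env_S_def env_A_def)

lemma JP0: "x \<in> {0..1} \<Longrightarrow> c \<in> {0,2} \<Longrightarrow> Jvec E0 2 Rs0 0 (P x c) 0 = x"
  by (auto simp: Jvec_def disc0 P_def Rs0_def)

lemma JP1: "x \<in> {0..1} \<Longrightarrow> c \<in> {0,2} \<Longrightarrow> Jvec E0 2 Rs0 0 (P x c) 1 = (if c = 2 then 1 - x else 0)"
  by (auto simp: Jvec_def disc0 P_def Rs0_def)

lemma not_fpr: "r0 \<notin> Ord_FPR E0"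
proof
  assume "r0 \<in> Ord_FPR E0"
  then obtain J :: "policy \<Rightarrow> real" where
    J: "r0 = {(\<pi>1, \<pi>2). \<pi>1 \<in> policies E0 \<and> \<pi>2 \<in> policies E0 \<and> J \<pi>1 \<ge> J \<pi>2}"
    by (auto simp: Ord_FPR_def)
  have memr: "(P x c, P y d) \<in> r0 \<longleftrightarrow> J (P x c) \<ge> J (P y d)"
    if "x \<in> {0..1}" "y \<in> {0..1}" "c \<in> {0,2}" "d \<in> {0,2}" for x y c d
    using P_in that by (simp add: J)
  have lt1: "J (P x 0) < J (P x 2)" if "x \<in> {0<..<1}" for x
  proof -
    define y where "y = x"
    have "(P x 0, P x 2) \<notin> r0"
      using that JP0[of x] JP1[of x] JP0[of y] JP1[of y] by (simp add: r0_def lexJ_def del: One_nat_def)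
    then show ?thesis using memr[of x x 0 2] that by simp
  qed
  have lt2: "J (P x 2) < J (P y 0)" if "x \<in> {0<..<1}" "y \<in> {0<..<1}" "x < y" for x y
  proof -
    have "(P x 2, P y 0) \<notin> r0"
      using that JP0[of x] JP1[of x] JP0[of y] JP1[of y] by (simp add: r0_def lexJ_def del: One_nat_def)
    then show ?thesis using memr[of x y 2 0] that by simp
  qed
  have "\<exists>q\<in>\<rat>. J (P x 0) < q \<and> q < J (P x 2)" if "x \<in> {0<..<1}" for x
    using Rats_dense_in_real[OF lt1[OF that]] by blast
  then obtain q where q: "\<And>x. x \<in> {0<..<1} \<Longrightarrow> q x \<in> \<rat> \<and> J (P x 0) < q x \<and> q x < J (P x 2)"
    by metis
  have mono: "q x < q y" if "x \<in> {0<..<1}" "y \<in> {0<..<1}" "x < y" for x y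
    using q[OF that(1)] q[OF that(2)] lt2[OF that] by linarith
  have "inj_on q {0<..<1::real}"
  proof (rule inj_onI)
    fix x y assume "x \<in> {0<..<1::real}" "y \<in> {0<..<1::real}" "q x = q y"
    then show "x = y" using mono[of x y] mono[of y x] by (cases "x < y"; cases "y < x") auto
  qed
  moreover have "countable (q ` {0<..<1::real})"
    using countable_subset[OF _ countable_rat] q by blast
  ultimately have "countable {0<..<1::real}" by (rule countable_image_inj_on[rotated])
  then show False using uncountable_open_interval[of 0 "1::real"] by simp
qed

theorem mainTheorem17:
  shows "\<exists>E r. wf_env E \<and> total_preorder_on (policies E) r
               \<and> r \<in> Ord_GOMORL E \<and> r \<notin> Ord_FPR E"
proof (intro exI conjI)
  show "wf_env E0" by (rule wf)
  show "total_preorder_on (policies E0) r0" by (rule tp_r0)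
  show "r0 \<notin> Ord_FPR E0" by (rule not_fpr)
  show "r0 \<in> Ord_GOMORL E0"
    unfolding Ord_GOMORL_def
    using tp_lex by (auto simp: r0_def intro!: exI[of _ 2] exI[of _ Rs0] exI[of _ "0::real"] exI[of _ lexJ])
qed

end
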